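(* Let $S$ be a finite semigroup and $J$ a regular $\mathscr J$-class of $S$ such that for any two distinct $\mathscr L$-classes $L,L'$ of $J$ there is an $\mathscr R$-class $R$ of $J$ such that exactly one of $R\cap L$ and $R\cap L'$ contains an idempotent. Then, for any right $G_J$-set $X$, the Green's congruence with respect to $e_J$ on $X\otimes_{G_J}R_J$ is the equality relation.
   Context: Semigroups act on the right; $e_J\in J$ is a fixed idempotent, $G_J$ its maximal subgroup, $R_J$ its $\mathscr R$-class, a partial $S$-set via $r\cdot s=rs$ if $rs\in R_J$, undefined otherwise. For a right $G_J$-set $X$, $X\otimes_{G_J}R_J$ is the set of orbits of $X\times R_J$ under $(x,r)g=(xg,g^{-1}r)$, orbits written $x\otimes r$, with partial right $S$-action $(x\otimes r)s=x\otimes rs$ if $rs\in R_J$ and undefined otherwise. The Green's congruence with respect to $e_J$ on a partial $S$-set $\Lambda$ is $\alpha\sim\beta$ iff for all $s\in S$, $\alpha se_J$ and $\beta se_J$ are both undefined or both defined and equal. *)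

theory Defs
  imports Main
begin

text \<open>The semigroup S is the (finite) type 's with multiplication (*).
  Green's relations are defined via principal ideals of S^1.\<close>

definition leR :: "'s::semigroup_mult \<Rightarrow> 's \<Rightarrow> bool" where
  "leR a b \<longleftrightarrow> a = b \<or> (\<exists>u. a = b * u)"

definition leL :: "'s::semigroup_mult \<Rightarrow> 's \<Rightarrow> bool" where
  "leL a b \<longleftrightarrow> a = b \<or> (\<exists>u. a = u * b)"

definition leJ :: "'s::semigroup_mult \<Rightarrow> 's \<Rightarrow> bool" where
  "leJ a b \<longleftrightarrow> a = b \<or> (\<exists>u. a = u * b) \<or> (\<exists>v. a = b * v) \<or> (\<exists>u v. a = u * b * v)"

definition greenR :: "'s::semigroup_mult \<Rightarrow> 's \<Rightarrow> bool" where
  "greenR a b \<longleftrightarrow> leR a b \<and> leR b a"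

definition greenL :: "'s::semigroup_mult \<Rightarrow> 's \<Rightarrow> bool" where
  "greenL a b \<longleftrightarrow> leL a b \<and> leL b a"

definition greenJ :: "'s::semigroup_mult \<Rightarrow> 's \<Rightarrow> bool" where
  "greenJ a b \<longleftrightarrow> leJ a b \<and> leJ b a"

definition greenH :: "'s::semigroup_mult \<Rightarrow> 's \<Rightarrow> bool" where
  "greenH a b \<longleftrightarrow> greenR a b \<and> greenL a b"

definition Rclass :: "'s::semigroup_mult \<Rightarrow> 's set" where
  "Rclass a = {b. greenR a b}"

definition Lclass :: "'s::semigroup_mult \<Rightarrow> 's set" where
  "Lclass a = {b. greenL a b}"

definition Hclass :: "'s::semigroup_mult \<Rightarrow> 's set" where
  "Hclass a = {b. greenH a b}"

definition Jclass :: "'s::semigroup_mult \<Rightarrow> 's set" where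
  "Jclass a = {b. greenJ a b}"

definition idem :: "'s::semigroup_mult \<Rightarrow> bool" where
  "idem f \<longleftrightarrow> f * f = f"

definition is_Jclass :: "'s::semigroup_mult set \<Rightarrow> bool" where
  "is_Jclass J \<longleftrightarrow> (\<exists>a. J = Jclass a)"

definition regular_Jclass :: "'s::semigroup_mult set \<Rightarrow> bool" where
  "regular_Jclass J \<longleftrightarrow> (\<forall>x\<in>J. \<exists>y. x * y * x = x)"

definition L_separated :: "'s::semigroup_mult set \<Rightarrow> bool" where
  "L_separated J \<longleftrightarrow>
     (\<forall>a\<in>J. \<forall>b\<in>J. Lclass a \<noteq> Lclass b \<longrightarrow>
        (\<exists>c\<in>J. (\<exists>f\<in>Rclass c \<inter> Lclass a. idem f) \<noteq> (\<exists>f\<in>Rclass c \<inter> Lclass b. idem f)))"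

definition grp_inv :: "'s::semigroup_mult \<Rightarrow> 's \<Rightarrow> 's" where
  "grp_inv e g = (THE h. h \<in> Hclass e \<and> g * h = e \<and> h * g = e)"

text \<open>A right G_e-set: the action act x g is only meaningful for g in Hclass e.\<close>
definition right_Gset :: "'s::semigroup_mult \<Rightarrow> ('x \<Rightarrow> 's \<Rightarrow> 'x) \<Rightarrow> bool" where
  "right_Gset e act \<longleftrightarrow>
     (\<forall>x. act x e = x) \<and>
     (\<forall>x. \<forall>g\<in>Hclass e. \<forall>h\<in>Hclass e. act (act x g) h = act x (g * h))"

text \<open>The orbit relation on X \<times> R_e for (x,r)g = (xg, g^-1 r).\<close>
definition orbit_rel :: "'s::semigroup_mult \<Rightarrow> ('x \<Rightarrow> 's \<Rightarrow> 'x) \<Rightarrow> (('x \<times> 's) \<times> ('x \<times> 's)) set" where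
  "orbit_rel e act =
     {((x, r), (y, t)). r \<in> Rclass e \<and> t \<in> Rclass e \<and>
        (\<exists>g\<in>Hclass e. y = act x g \<and> t = grp_inv e g * r)}"

definition tensor :: "'s::semigroup_mult \<Rightarrow> ('x \<Rightarrow> 's \<Rightarrow> 'x) \<Rightarrow> ('x \<times> 's) set set" where
  "tensor e act = (UNIV \<times> Rclass e) // orbit_rel e act"

definition tensor_elem :: "'s::semigroup_mult \<Rightarrow> ('x \<Rightarrow> 's \<Rightarrow> 'x) \<Rightarrow> 'x \<Rightarrow> 's \<Rightarrow> ('x \<times> 's) set" where
  "tensor_elem e act x r = orbit_rel e act `` {(x, r)}"

text \<open>Partial right action (x \<otimes> r) s = x \<otimes> rs if rs \<in> R_e, undefined otherwise
  (computed on a chosen representative).\<close>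
definition tensor_act :: "'s::semigroup_mult \<Rightarrow> ('x \<Rightarrow> 's \<Rightarrow> 'x) \<Rightarrow> ('x \<times> 's) set \<Rightarrow> 's \<Rightarrow> ('x \<times> 's) set option" where
  "tensor_act e act \<alpha> s =
     (let p = (SOME p. p \<in> \<alpha>) in
       if snd p * s \<in> Rclass e then Some (tensor_elem e act (fst p) (snd p * s)) else None)"

text \<open>Green's congruence with respect to e on the partial S-set X \<otimes> R_e:
  \<alpha> ~ \<beta> iff for all s, \<alpha>se and \<beta>se are both undefined or both defined and equal.\<close>
definition greens_congruence :: "'s::semigroup_mult \<Rightarrow> ('x \<Rightarrow> 's \<Rightarrow> 'x) \<Rightarrow> (('x \<times> 's) set \<times> ('x \<times> 's) set) set" where
  "greens_congruence e act =
     {(\<alpha>, \<beta>). \<alpha> \<in> tensor e act \<and> \<beta> \<in> tensor e act \<and>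
        (\<forall>s. Option.bind (tensor_act e act \<alpha> s) (\<lambda>\<gamma>. tensor_act e act \<gamma> e) =
             Option.bind (tensor_act e act \<beta> s) (\<lambda>\<gamma>. tensor_act e act \<gamma> e))}"

end

theory Submission
  imports Defs
begin

lemma leR_trans: "leR a b \<Longrightarrow> leR b c \<Longrightarrow> leR a (c::'s::semigroup_mult)"
  unfolding leR_def by (metis mult.assoc)
lemma leL_trans: "leL a b \<Longrightarrow> leL b c \<Longrightarrow> leL a (c::'s::semigroup_mult)"
  unfolding leL_def by (metis mult.assoc)
lemma leJ_trans: "leJ a b \<Longrightarrow> leJ b c \<Longrightarrow> leJ a (c::'s::semigroup_mult)"
  unfolding leJ_def
  apply (elim disjE exE)
  apply (simp_all only: mult.assoc)
  apply (metis mult.assoc)+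
  done

lemma leR_refl: "leR a a" by (simp add: leR_def)
lemma leL_refl: "leL a a" by (simp add: leL_def)
lemma leR_mult: "leR (a*b) (a::'s::semigroup_mult)" unfolding leR_def by blast
lemma leL_mult: "leL (a*b) (b::'s::semigroup_mult)" unfolding leL_def by blast
lemma leR_leJ: "leR a b \<Longrightarrow> leJ a (b::'s::semigroup_mult)" unfolding leR_def leJ_def by blast
lemma leL_leJ: "leL a b \<Longrightarrow> leJ a (b::'s::semigroup_mult)" unfolding leL_def leJ_def by blast

lemma greenR_sym: "greenR a b \<Longrightarrow> greenR b a" by (simp add: greenR_def)
lemma greenL_sym: "greenL a b \<Longrightarrow> greenL b a" by (simp add: greenL_def)
lemma greenJ_sym: "greenJ a b \<Longrightarrow> greenJ b a" by (simp add: greenJ_def)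
lemma greenR_trans: "greenR a b \<Longrightarrow> greenR b c \<Longrightarrow> greenR a (c::'s::semigroup_mult)"
  unfolding greenR_def using leR_trans by blast
lemma greenL_trans: "greenL a b \<Longrightarrow> greenL b c \<Longrightarrow> greenL a (c::'s::semigroup_mult)"
  unfolding greenL_def using leL_trans by blast
lemma greenJ_trans: "greenJ a b \<Longrightarrow> greenJ b c \<Longrightarrow> greenJ a (c::'s::semigroup_mult)"
  unfolding greenJ_def using leJ_trans by blast
lemma greenR_J: "greenR a b \<Longrightarrow> greenJ a (b::'s::semigroup_mult)"
  unfolding greenR_def greenJ_def using leR_leJ by blast

lemma lp_rp: "((\<lambda>w. u*w)^^n) (w*y) = ((\<lambda>w. u*w)^^n) w * (y::'s::semigroup_mult)"
  by (induction n) (auto simp: mult.assoc)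
lemma rp_lp: "((\<lambda>w. w*y)^^n) (u*w) = u * ((\<lambda>w. w*y)^^n) (w::'s::semigroup_mult)"
  by (induction n) (auto simp: mult.assoc)

lemma lp_rp_comm: "((\<lambda>w. u*w)^^n) (((\<lambda>w. w*y)^^m) z) = ((\<lambda>w. w*y)^^m) (((\<lambda>w. u*w)^^n) (z::'s::semigroup_mult))"
  by (induction m) (auto simp: lp_rp)

lemma rp_form: "((\<lambda>w. w*y)^^k) z = z \<or> (\<exists>w. ((\<lambda>w. w*y)^^k) z = z * (w::'s::semigroup_mult))"
  by (induction k) (auto simp: mult.assoc)
lemma lp_form: "((\<lambda>w. y*w)^^k) z = z \<or> (\<exists>w. ((\<lambda>w. y*w)^^k) z = w * (z::'s::semigroup_mult))"
  by (induction k) (auto simp: mult.assoc[symmetric])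

lemma not_inj_nat: "\<exists>i j::nat. i < j \<and> f i = (f j :: 'a::finite)"
proof -
  have "\<not> inj f"
  proof
    assume inj: "inj f"
    have fr: "finite (range f)" by (rule finite_subset[OF subset_UNIV]) (rule finite_UNIV)
    have "finite (UNIV::nat set)"
      using finite_imageD[OF fr inj] .
    thus False by simp
  qed
  then obtain i j where ij: "i \<noteq> j" "f i = f j" unfolding inj_def by blast
  show ?thesis
  proof (cases "i < j")
    case True thus ?thesis using ij by blast
  next
    case False hence "j < i" using ij(1) by simp
    thus ?thesis using ij(2) by (intro exI[of _ j] exI[of _ i]) simp
  qed
qed

lemma coreR:
  fixes a :: "'s::{semigroup_mult,finite}"
  assumes "a = u*a*y" shows "leR a (a*y)"
proof -
  let ?L = "\<lambda>w. u*w" and ?R = "\<lambda>w. w*y"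
  have A: "a = (?L^^n) ((?R^^n) a)" for n
  proof (induction n)
    case (Suc n)
    have "(?L^^Suc n) ((?R^^Suc n) a) = u * ((?L^^n) ((?R^^n) a) * y)"
      by (simp add: lp_rp)
    also have "\<dots> = u * (a * y)" by (simp only: Suc.IH[symmetric])
    also have "\<dots> = a" by (metis assms mult.assoc)
    finally show ?case by (rule sym)
  qed simp
  obtain i j where ij: "i < j" "(?R^^i) a = (?R^^j) a" using not_inj_nat[of "\<lambda>n. (?R^^n) a"] by blast
  obtain k0 where "j = Suc (i + k0)" using less_imp_Suc_add[OF ij(1)] by blast
  hence k: "j = Suc k0 + i" by simp
  have "a = (?L^^i) ((?R^^j) a)" by (subst ij(2)[symmetric], rule A)
  also have "\<dots> = (?L^^i) ((?R^^Suc k0) ((?R^^i) a))" by (simp add: k funpow_add)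
  also have "\<dots> = (?R^^Suc k0) a" by (subst lp_rp_comm, subst A[symmetric], rule refl)
  also have "\<dots> = (?R^^k0) (a*y)" by (simp only: funpow_Suc_right comp_def)
  finally have "a = (?R^^k0) (a*y)" .
  thus ?thesis using rp_form[where y=y and k=k0 and z="a*y"] unfolding leR_def by (metis)
qed

lemma coreL:
  fixes a :: "'s::{semigroup_mult,finite}"
  assumes "a = y*a*u" shows "leL a (y*a)"
proof -
  let ?R = "\<lambda>w. w*u" and ?L = "\<lambda>w. y*w"
  have A: "a = (?R^^n) ((?L^^n) a)" for n
  proof (induction n)
    case (Suc n)
    have "(?R^^Suc n) ((?L^^Suc n) a) = (y * (?R^^n) ((?L^^n) a)) * u"
      by (simp add: rp_lp)
    also have "\<dots> = (y * a) * u" by (simp only: Suc.IH[symmetric])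
    also have "\<dots> = a" by (metis assms mult.assoc)
    finally show ?case by (rule sym)
  qed simp
  obtain i j where ij: "i < j" "(?L^^i) a = (?L^^j) a" using not_inj_nat[of "\<lambda>n. (?L^^n) a"] by blast
  obtain k0 where "j = Suc (i + k0)" using less_imp_Suc_add[OF ij(1)] by blast
  hence k: "j = Suc k0 + i" by simp
  have "a = (?R^^i) ((?L^^j) a)" by (subst ij(2)[symmetric], rule A)
  also have "\<dots> = (?R^^i) ((?L^^Suc k0) ((?L^^i) a))" by (simp add: k funpow_add)
  also have "\<dots> = (?L^^Suc k0) a" by (subst lp_rp_comm[symmetric], subst A[symmetric], rule refl)
  also have "\<dots> = (?L^^k0) (y*a)" by (simp only: funpow_Suc_right comp_def)
  finally have "a = (?L^^k0) (y*a)" .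
  thus ?thesis using lp_form[where y=y and k=k0 and z="y*a"] unfolding leL_def by (metis)
qed

lemma stabR:
  fixes a :: "'s::{semigroup_mult,finite}"
  assumes "leJ a (a*b)" shows "leR a (a*b)"
  using assms unfolding leJ_def
proof (elim disjE exE)
  assume "a = a*b" thus ?thesis by (simp add: leR_def)
next
  fix u assume "a = u*(a*b)" thus ?thesis using coreR[of a u b] by (simp add: mult.assoc)
next
  fix v assume "a = a*b*v" thus ?thesis by (auto simp: leR_def)
next
  fix u v assume "a = u*(a*b)*v"
  hence "a = u*a*(b*v)" by (simp add: mult.assoc)
  hence "leR a (a*(b*v))" by (rule coreR)
  moreover have "leR (a*(b*v)) (a*b)" by (metis leR_mult mult.assoc)
  ultimately show ?thesis by (rule leR_trans)
qed

lemma stabL: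
  fixes a :: "'s::{semigroup_mult,finite}"
  assumes "leJ b (a*b)" shows "leL b (a*b)"
  using assms unfolding leJ_def
proof (elim disjE exE)
  assume "b = a*b" thus ?thesis by (simp add: leL_def)
next
  fix u assume "b = u*(a*b)" thus ?thesis by (auto simp: leL_def)
next
  fix v assume "b = a*b*v" thus ?thesis using coreL[of b a v] by (simp add: mult.assoc)
next
  fix u v assume "b = u*(a*b)*v"
  hence "b = (u*a)*b*v" by (simp add: mult.assoc)
  hence "leL b ((u*a)*b)" by (rule coreL)
  moreover have "leL ((u*a)*b) (a*b)" by (metis leL_mult mult.assoc)
  ultimately show ?thesis by (rule leL_trans)
qed

lemma CM:
  fixes t :: "'s::{semigroup_mult,finite}"
  assumes f: "idem f" and J1: "greenJ t (t*f)" and J2: "greenJ f (t*f)"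
  shows "\<exists>k. idem k \<and> greenL t k \<and> greenR f k"
proof -
  have ff: "f*f = f" using f by (simp add: idem_def)
  have "leR t (t*f)" using J1 stabR by (auto simp: greenJ_def)
  then obtain z where z: "t = t*f*z" unfolding leR_def by (metis ff mult.assoc)
  have "leL f (t*f)" using J2 stabL by (auto simp: greenJ_def)
  then obtain w where w: "f = w*t*f" unfolding leL_def by (metis ff mult.assoc)
  define k where "k = w*t"
  have kf: "k = f*z" unfolding k_def by (metis z w mult.assoc)
  have "k*k = k" by (metis kf k_def w mult.assoc)
  moreover have "greenL t k" unfolding greenL_def leL_def
    by (metis k_def z kf mult.assoc)
  moreover have "greenR f k" unfolding greenR_def leR_def
    by (metis k_def w kf mult.assoc)
  ultimately show ?thesis by (auto simp: idem_def)
qed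


lemma R_left:
  assumes "idem e" "r \<in> Rclass e" shows "e*r = (r::'s::semigroup_mult)"
proof -
  have ee: "e*e = e" using assms(1) by (simp add: idem_def)
  have "r = e \<or> (\<exists>u. r = e*u)" using assms(2) by (simp add: Rclass_def greenR_def leR_def)
  thus ?thesis
  proof (elim disjE exE)
    fix u assume "r = e*u" thus ?thesis using ee by (simp add: mult.assoc[symmetric])
  qed (simp add: ee)
qed
lemma L_right:
  assumes "idem e" "greenL e g" shows "g*e = (g::'s::semigroup_mult)"
proof -
  have ee: "e*e = e" using assms(1) by (simp add: idem_def)
  have "g = e \<or> (\<exists>u. g = u*e)" using assms(2) by (simp add: greenL_def leL_def)
  thus ?thesis
  proof (elim disjE exE)
    fix u assume "g = u*e" thus ?thesis using ee by (simp add: mult.assoc)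
  qed (simp add: ee)
qed
lemma R_inv: "idem e \<Longrightarrow> greenR e r \<Longrightarrow> \<exists>v. r*v = (e::'s::semigroup_mult)"
  unfolding greenR_def leR_def idem_def by auto
lemma L_inv: "idem e \<Longrightarrow> greenL e g \<Longrightarrow> \<exists>w. w*g = (e::'s::semigroup_mult)"
  unfolding greenL_def leL_def idem_def by auto

lemma H_iff: "g \<in> Hclass e \<longleftrightarrow> greenR e g \<and> greenL e g"
  by (simp add: Hclass_def greenH_def)

lemma e_in_H: "e \<in> Hclass e"
  by (simp add: H_iff greenR_def greenL_def leR_refl leL_refl)

lemma H_inv_ex:
  fixes e :: "'s::semigroup_mult"
  assumes ide: "idem e" and g: "g \<in> Hclass e"
  shows "\<exists>h \<in> Hclass e. g*h = e \<and> h*g = e"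
proof -
  have gR: "greenR e g" and gL: "greenL e g" using g by (auto simp: H_iff)
  have eg: "e*g = g" using R_left[OF ide] gR by (simp add: Rclass_def)
  have ge: "g*e = g" using L_right[OF ide gL] .
  have ee: "e*e = e" using ide by (simp add: idem_def)
  obtain v where v: "g*v = e" using R_inv[OF ide gR] by blast
  obtain w where w: "w*g = e" using L_inv[OF ide gL] by blast
  define h where "h = e*v"
  have gh: "g*h = e" unfolding h_def by (metis ge v mult.assoc)
  have "w*e = h" by (metis gh w ee h_def mult.assoc)
  hence hg: "h*g = e" by (metis w eg mult.assoc)
  have "h \<in> Hclass e" unfolding H_iff greenR_def greenL_def leR_def leL_def
    using hg gh h_def \<open>w*e = h\<close> by metis
  thus ?thesis using gh hg by blast
qed

lemma grp_inv_props:
  fixes e :: "'s::semigroup_mult"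
  assumes ide: "idem e" and g: "g \<in> Hclass e"
  shows "grp_inv e g \<in> Hclass e \<and> g * grp_inv e g = e \<and> grp_inv e g * g = e"
proof -
  obtain h where h: "h \<in> Hclass e" "g*h = e" "h*g = e" using H_inv_ex[OF ide g] by blast
  have "grp_inv e g = h" unfolding grp_inv_def
  proof (rule the_equality)
    fix h' assume h': "h' \<in> Hclass e \<and> g * h' = e \<and> h' * g = e"
    have "h' = h'*e" using L_right[OF ide] h' by (simp add: H_iff)
    also have "\<dots> = e*h" by (metis h(2) h' mult.assoc)
    also have "\<dots> = h" using R_left[OF ide] h(1) by (simp add: H_iff Rclass_def)
    finally show "h' = h" .
  qed (use h in auto)
  thus ?thesis using h by simp
qed

lemma grp_inv_eq:
  fixes e :: "'s::semigroup_mult"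
  assumes ide: "idem e" and g: "g \<in> Hclass e" and h: "h \<in> Hclass e" and gh: "g*h = e"
  shows "grp_inv e g = h"
proof -
  note P = grp_inv_props[OF ide g]
  have "grp_inv e g = grp_inv e g * e" using L_right[OF ide] P by (simp add: H_iff)
  also have "\<dots> = e*h" by (metis gh P mult.assoc)
  also have "\<dots> = h" using R_left[OF ide] h by (simp add: H_iff Rclass_def)
  finally show ?thesis .
qed

lemma H_mult:
  fixes e :: "'s::semigroup_mult"
  assumes ide: "idem e" and g: "g \<in> Hclass e" and h: "h \<in> Hclass e"
  shows "g*h \<in> Hclass e"
proof -
  note G = grp_inv_props[OF ide g] and Hh = grp_inv_props[OF ide h]
  have eh: "e*h = h" using R_left[OF ide] h by (simp add: H_iff Rclass_def)
  have ge: "g*e = g" using L_right[OF ide] g by (simp add: H_iff)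
  have gR: "leR g e" and hL: "leL h e" using g h by (auto simp: H_iff greenR_def greenL_def)
  have 1: "e = (g*h)*(grp_inv e h * grp_inv e g)"
    by (metis G Hh ge mult.assoc)
  have 2: "e = (grp_inv e h * grp_inv e g)*(g*h)"
    by (metis G Hh eh mult.assoc)
  have "leR (g*h) e" using leR_trans[OF leR_mult gR] .
  moreover have "leL (g*h) e" using leL_trans[OF leL_mult hL] .
  ultimately show ?thesis unfolding H_iff greenR_def greenL_def using 1 2
    by (auto simp: leR_def leL_def)
qed

lemma H_R:
  fixes e :: "'s::semigroup_mult"
  assumes ide: "idem e" and k: "k \<in> Hclass e" and z: "z \<in> Rclass e"
  shows "k*z \<in> Rclass e"
proof -
  note K = grp_inv_props[OF ide k]
  obtain v where v: "z*v = e" using R_inv[OF ide] z by (auto simp: Rclass_def)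
  have ke: "k*e = k" using L_right[OF ide] k by (simp add: H_iff)
  have "e = (k*z)*(v*grp_inv e k)" by (metis v ke K mult.assoc)
  moreover have "leR k e" using k by (simp add: H_iff greenR_def)
  ultimately show ?thesis unfolding Rclass_def greenR_def
    using leR_trans[OF leR_mult] by (auto simp: leR_def)
qed

lemma orbit_rel_iff: "((x,r),(y,t)) \<in> orbit_rel e act \<longleftrightarrow> r \<in> Rclass e \<and> t \<in> Rclass e \<and>
        (\<exists>g\<in>Hclass e. y = act x g \<and> t = grp_inv e g * r)"
  by (simp add: orbit_rel_def)

lemma orbit_equiv:
  fixes e :: "'s::semigroup_mult" and act :: "'x \<Rightarrow> 's \<Rightarrow> 'x"
  assumes ide: "idem e" and act: "right_Gset e act"
  shows "equiv (UNIV \<times> Rclass e) (orbit_rel e act)"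
proof (rule equivI)
  have A1: "act x e = x" for x using act by (simp add: right_Gset_def)
  have A2: "\<And>x g h. g \<in> Hclass e \<Longrightarrow> h \<in> Hclass e \<Longrightarrow> act (act x g) h = act x (g*h)"
    using act by (simp add: right_Gset_def)
  have ie: "grp_inv e e = e" using grp_inv_eq[OF ide e_in_H e_in_H] ide by (simp add: idem_def)
  show "orbit_rel e act \<subseteq> (UNIV \<times> Rclass e) \<times> (UNIV \<times> Rclass e)"
    by (auto simp: orbit_rel_def)
  show "refl_on (UNIV \<times> Rclass e) (orbit_rel e act)"
  proof (rule refl_onI)
    fix p :: "'x \<times> 's" assume "p \<in> UNIV \<times> Rclass e"
    then obtain x r where p: "p = (x,r)" "r \<in> Rclass e" by auto
    thus "(p,p) \<in> orbit_rel e act" unfolding orbit_rel_iff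
      using A1 ie R_left[OF ide] e_in_H by (metis p(1) orbit_rel_iff)
  qed
  show "sym (orbit_rel e act)"
  proof (rule symI)
    fix p q :: "'x \<times> 's" assume "(p,q) \<in> orbit_rel e act"
    then obtain x r y t g where pq: "p = (x,r)" "q = (y,t)" "r \<in> Rclass e" "t \<in> Rclass e"
      "g \<in> Hclass e" "y = act x g" "t = grp_inv e g * r"
      by (cases p; cases q) (auto simp: orbit_rel_iff)
    note G = grp_inv_props[OF ide pq(5)]
    have "grp_inv e (grp_inv e g) = g" using grp_inv_eq[OF ide _ pq(5)] G by blast
    hence "r = grp_inv e (grp_inv e g) * t"
      using pq G R_left[OF ide pq(3)] by (simp add: mult.assoc[symmetric])
    moreover have "x = act y (grp_inv e g)" using pq G A1 A2 by simp
    ultimately have "((y,t),(x,r)) \<in> orbit_rel e act" using pq(3,4) G unfolding orbit_rel_iff by blast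
    thus "(q,p) \<in> orbit_rel e act" using pq(1,2) by simp
  qed
  show "trans (orbit_rel e act)"
  proof (rule transI)
    fix p q w :: "'x \<times> 's" assume "(p,q) \<in> orbit_rel e act" "(q,w) \<in> orbit_rel e act"
    then obtain x r y t z u g h where pq: "p = (x,r)" "q = (y,t)" "w = (z,u)" "r \<in> Rclass e" "t \<in> Rclass e"
      "u \<in> Rclass e"
      "g \<in> Hclass e" "y = act x g" "t = grp_inv e g * r"
      "h \<in> Hclass e" "z = act y h" "u = grp_inv e h * t"
      by (cases p; cases q; cases w) (auto simp: orbit_rel_iff)
    note G = grp_inv_props[OF ide pq(7)] and Hh = grp_inv_props[OF ide pq(10)]
    have gh: "g*h \<in> Hclass e" using H_mult[OF ide pq(7,10)] .
    have ge: "g*e = g" using L_right[OF ide] pq(7) by (simp add: H_iff)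
    have hg: "grp_inv e h * grp_inv e g \<in> Hclass e" using H_mult[OF ide] G Hh by blast
    have "(g*h)*(grp_inv e h * grp_inv e g) = g*(h*grp_inv e h)*grp_inv e g" by (simp add: mult.assoc)
    also have "\<dots> = g*e*grp_inv e g" using Hh by simp
    also have "\<dots> = e" using ge G by simp
    finally have "grp_inv e (g*h) = grp_inv e h * grp_inv e g" by (rule grp_inv_eq[OF ide gh hg])
    hence "((x,r),(z,u)) \<in> orbit_rel e act" using pq gh A2 unfolding orbit_rel_iff
      by (auto simp: mult.assoc)
    thus "(p,w) \<in> orbit_rel e act" using pq(1,3) by simp
  qed
qed


lemma tensor_act_elem:
  fixes e :: "'s::semigroup_mult"
  assumes ide: "idem e" and act: "right_Gset e act" and r: "r \<in> Rclass e"
  shows "tensor_act e act (tensor_elem e act x r) s =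
    (if r*s \<in> Rclass e then Some (tensor_elem e act x (r*s)) else None)"
proof -
  note EQ = orbit_equiv[OF ide act]
  let ?a = "tensor_elem e act x r"
  have "(x,r) \<in> ?a" unfolding tensor_elem_def using equiv_class_self[OF EQ] r by auto
  hence p0: "(SOME p. p \<in> ?a) \<in> ?a" by (rule someI)
  define p where "p = (SOME p. p \<in> ?a)"
  have pa: "p \<in> ?a" using p0 unfolding p_def .
  obtain x' r' where xr: "p = (x',r')" by (cases p)
  have "((x,r),(x',r')) \<in> orbit_rel e act" using pa xr unfolding tensor_elem_def by simp
  then obtain g where g0: "g \<in> Hclass e" "x' = act x g" "r' = grp_inv e g * r"
    unfolding orbit_rel_iff by blast
  have g: "g \<in> Hclass e" "fst p = act x g" "snd p = grp_inv e g * r" using g0 xr by auto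
  note G = grp_inv_props[OF ide g(1)]
  have sp: "snd p * s = grp_inv e g * (r*s)" using g by (simp add: mult.assoc)
  have iff: "snd p * s \<in> Rclass e \<longleftrightarrow> r*s \<in> Rclass e"
  proof
    assume "snd p * s \<in> Rclass e"
    hence "g * (snd p * s) \<in> Rclass e" using H_R[OF ide g(1)] by blast
    moreover have "g * (snd p * s) = r*s" using sp G R_left[OF ide r]
      by (metis mult.assoc)
    ultimately show "r*s \<in> Rclass e" by simp
  next
    assume "r*s \<in> Rclass e"
    thus "snd p * s \<in> Rclass e" using sp H_R[OF ide] G by simp
  qed
  have cls: "r*s \<in> Rclass e \<Longrightarrow> tensor_elem e act (fst p) (snd p * s) = tensor_elem e act x (r*s)"
  proof -
    assume rs: "r*s \<in> Rclass e"
    hence "((x, r*s), (fst p, snd p * s)) \<in> orbit_rel e act"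
      using iff g sp unfolding orbit_rel_iff by blast
    thus ?thesis unfolding tensor_elem_def using equiv_class_eq[OF EQ] by metis
  qed
  show ?thesis unfolding tensor_act_def Let_def p_def[symmetric] using iff cls by simp
qed

lemma tensorE:
  assumes "\<alpha> \<in> tensor e act"
  obtains x r where "r \<in> Rclass e" "\<alpha> = tensor_elem e act x r"
  using assms unfolding tensor_def tensor_elem_def by (auto elim!: quotientE)

lemma ase_elem:
  fixes e :: "'s::semigroup_mult"
  assumes ide: "idem e" and act: "right_Gset e act" and r: "r \<in> Rclass e"
  shows "Option.bind (tensor_act e act (tensor_elem e act x r) s) (\<lambda>\<gamma>. tensor_act e act \<gamma> e) =
    (if r*s \<in> Rclass e \<and> r*s*e \<in> Rclass e then Some (tensor_elem e act x (r*s*e)) else None)"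
  using tensor_act_elem[OF ide act r] tensor_act_elem[OF ide act, of "r*s"] by simp

lemma sep_step:
  fixes e :: "'s::{semigroup_mult,finite}"
  assumes ide: "idem e" and Jc: "\<And>b. b \<in> J \<longleftrightarrow> greenJ e b"
    and r: "r \<in> Rclass e" and t: "t \<in> Rclass e" and c: "c \<in> J"
    and f: "f \<in> Rclass c \<inter> Lclass r" "idem f"
    and C: "\<And>s. r*s \<in> Rclass e \<and> r*s*e \<in> Rclass e \<Longrightarrow> t*s \<in> Rclass e"
  shows "\<exists>k\<in>Rclass c \<inter> Lclass t. idem k"
proof -
  have ee: "e*e = e" using ide by (simp add: idem_def)
  obtain v where v: "r*v = e" using R_inv[OF ide] r by (auto simp: Rclass_def)
  have rf: "r*f = r" using f unfolding Lclass_def greenL_def leL_def idem_def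
    by (auto simp: mult.assoc)
  have eR: "e \<in> Rclass e" by (simp add: Rclass_def greenR_def leR_refl)
  have "r*(f*v) = e" by (metis rf v mult.assoc)
  hence "t*(f*v) \<in> Rclass e" using C[of "f*v"] eR ee by simp
  hence "greenR e (t*(f*v))" by (simp add: Rclass_def)
  moreover have "greenR t e" using t greenR_sym by (simp add: Rclass_def)
  ultimately have "greenR t (t*(f*v))" using greenR_trans by blast
  hence "leR t (t*f*v)" by (simp add: greenR_def mult.assoc)
  hence "leJ t (t*f)" unfolding leR_def leJ_def by (metis mult.assoc)
  hence J1: "greenJ t (t*f)" unfolding greenJ_def using leR_leJ[OF leR_mult] by blast
  have tJ: "greenJ e t" using t greenR_J by (auto simp: Rclass_def)
  have "greenJ c f" using f(1) greenR_J by (auto simp: Rclass_def)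
  moreover have "greenJ e c" using Jc c by blast
  ultimately have fJ: "greenJ e f" using greenJ_trans by blast
  have "greenJ f t" using tJ fJ greenJ_sym greenJ_trans by blast
  hence "leJ f (t*f)" using J1 leJ_trans by (auto simp: greenJ_def)
  hence J2: "greenJ f (t*f)" unfolding greenJ_def using leL_leJ[OF leL_mult] by blast
  obtain k where k: "idem k" "greenL t k" "greenR f k" using CM[OF f(2) J1 J2] by blast
  have "greenR c k" using f(1) k(3) greenR_trans by (auto simp: Rclass_def)
  thus ?thesis using k by (auto simp: Rclass_def Lclass_def)
qed

lemma step2:
  fixes e :: "'s::semigroup_mult"
  assumes ide: "idem e" and r: "r \<in> Rclass e" and t: "t \<in> Rclass e" and rt: "greenL r t"
  shows "\<exists>g\<in>Hclass e. g*r = t"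
proof -
  have ee: "e*e = e" using ide by (simp add: idem_def)
  have er: "e*r = r" and et: "e*t = t" using R_left[OF ide] r t by auto
  obtain u where u: "t = u*r" using rt er unfolding greenL_def leL_def by metis
  obtain u' where u': "r = u'*t" using rt et unfolding greenL_def leL_def by metis
  obtain v where v: "r*v = e" using R_inv[OF ide] r by (auto simp: Rclass_def)
  obtain v' where v': "t*v' = e" using R_inv[OF ide] t by (auto simp: Rclass_def)
  define g where "g = e*u*e"
  define g' where "g' = e*u'*e"
  have gr: "g*r = t" unfolding g_def by (metis er et u mult.assoc)
  have gt: "g'*t = r" unfolding g'_def by (metis er et u' mult.assoc)
  have "g'*g = e" by (metis gr gt v g_def ee mult.assoc)
  moreover have "g*g' = e" by (metis gr gt v' g'_def ee mult.assoc)
  ultimately have "g \<in> Hclass e" unfolding H_iff greenR_def greenL_def leR_def leL_def g_def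
    by (metis mult.assoc)
  thus ?thesis using gr by blast
qed

theorem proposition2p9:
  fixes J :: "'s::{semigroup_mult, finite} set"
    and e :: 's
    and act :: "'x \<Rightarrow> 's \<Rightarrow> 'x"
  assumes "is_Jclass J"
    and "regular_Jclass J"
    and "L_separated J"
    and "e \<in> J"
    and "idem e"
    and "right_Gset e act"
  shows "greens_congruence e act = Id_on (tensor e act)"
proof -
  note ide = assms(5) and act = assms(6)
  note EQ = orbit_equiv[OF ide act]
  have Jc: "b \<in> J \<longleftrightarrow> greenJ e b" for b
  proof -
    obtain a where a: "J = Jclass a" using assms(1) by (auto simp: is_Jclass_def)
    have "greenJ a e" using assms(4) a by (simp add: Jclass_def)
    thus ?thesis using a greenJ_sym greenJ_trans unfolding Jclass_def by blast
  qed
  have ee: "e*e = e" using ide by (simp add: idem_def)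
  have eR: "e \<in> Rclass e" by (simp add: Rclass_def greenR_def leR_refl)
  have RJ: "r \<in> Rclass e \<Longrightarrow> r \<in> J" for r using Jc greenR_J by (auto simp: Rclass_def)
  show ?thesis
  proof
    show "Id_on (tensor e act) \<subseteq> greens_congruence e act"
      by (auto simp: greens_congruence_def)
  next
    show "greens_congruence e act \<subseteq> Id_on (tensor e act)"
    proof
      fix p assume "p \<in> greens_congruence e act"
      then obtain \<alpha> \<beta> where p: "p = (\<alpha>,\<beta>)" "\<alpha> \<in> tensor e act" "\<beta> \<in> tensor e act"
        and C0: "\<And>s. Option.bind (tensor_act e act \<alpha> s) (\<lambda>\<gamma>. tensor_act e act \<gamma> e) =
             Option.bind (tensor_act e act \<beta> s) (\<lambda>\<gamma>. tensor_act e act \<gamma> e)"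
        unfolding greens_congruence_def by auto
      obtain x r where r: "r \<in> Rclass e" and a: "\<alpha> = tensor_elem e act x r" using p(2) by (rule tensorE)
      obtain y t where t: "t \<in> Rclass e" and b: "\<beta> = tensor_elem e act y t" using p(3) by (rule tensorE)
      have C: "(if r*s \<in> Rclass e \<and> r*s*e \<in> Rclass e then Some (tensor_elem e act x (r*s*e)) else None)
        = (if t*s \<in> Rclass e \<and> t*s*e \<in> Rclass e then Some (tensor_elem e act y (t*s*e)) else None)" for s
        using C0[of s] unfolding a b ase_elem[OF ide act r] ase_elem[OF ide act t] .
      have Crt: "r*s \<in> Rclass e \<and> r*s*e \<in> Rclass e \<longleftrightarrow> t*s \<in> Rclass e \<and> t*s*e \<in> Rclass e" for s
        using C[of s] by (auto split: if_splits)
      have LL: "Lclass r = Lclass t"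
      proof (rule ccontr)
        assume ne: "Lclass r \<noteq> Lclass t"
        obtain c where c: "c \<in> J" and
          d: "(\<exists>f\<in>Rclass c \<inter> Lclass r. idem f) \<noteq> (\<exists>f\<in>Rclass c \<inter> Lclass t. idem f)"
          using assms(3) RJ[OF r] RJ[OF t] ne unfolding L_separated_def by blast
        show False
        proof (cases "\<exists>f\<in>Rclass c \<inter> Lclass r. idem f")
          case True
          then obtain f where "f \<in> Rclass c \<inter> Lclass r" "idem f" by blast
          from sep_step[OF ide Jc r t c this] Crt d True show False by blast
        next
          case False
          then obtain f where "f \<in> Rclass c \<inter> Lclass t" "idem f" using d by blast
          from sep_step[OF ide Jc t r c this] Crt d False show False by blast
        qed
      qed
      have "greenL r t" using LL by (metis Lclass_def greenL_def leL_refl mem_Collect_eq)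
      then obtain g where g: "g \<in> Hclass e" "g*r = t" using step2[OF ide r t] by blast
      note G = grp_inv_props[OF ide g(1)]
      define y' where "y' = act y g"
      have "((y,t),(y',r)) \<in> orbit_rel e act" unfolding orbit_rel_iff y'_def
        using r t g G R_left[OF ide r] by (metis mult.assoc)
      hence b': "\<beta> = tensor_elem e act y' r" unfolding b tensor_elem_def
        using equiv_class_eq[OF EQ] by metis
      obtain v where v: "r*v = e" using R_inv[OF ide] r by (auto simp: Rclass_def)
      have "Some (tensor_elem e act x e) = Some (tensor_elem e act y' e)"
        using C0[of v] unfolding a b' ase_elem[OF ide act r] using v ee eR by simp
      hence "tensor_elem e act x e = tensor_elem e act y' e" by simp
      moreover have "(y',e) \<in> tensor_elem e act y' e" unfolding tensor_elem_def
        using equiv_class_self[OF EQ] eR by auto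
      ultimately have "(y',e) \<in> tensor_elem e act x e" by simp
      hence "((x,e),(y',e)) \<in> orbit_rel e act" unfolding tensor_elem_def by simp
      then obtain h where h: "h \<in> Hclass e" "y' = act x h" "e = grp_inv e h * e"
        unfolding orbit_rel_iff by blast
      note Hh = grp_inv_props[OF ide h(1)]
      have "grp_inv e h * e = grp_inv e h" using L_right[OF ide] Hh by (simp add: H_iff)
      hence "grp_inv e h = e" using h(3) by (metis)
      moreover have "h*e = h" using L_right[OF ide] h by (simp add: H_iff)
      ultimately have "h = e" using Hh by metis
      hence "y' = x" using h act by (simp add: right_Gset_def)
      hence "\<alpha> = \<beta>" using a b' by simp
      thus "p \<in> Id_on (tensor e act)" using p by (auto intro: Id_onI)
    qed
  qed
qed

end
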